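(* Suppose $U\in\mathbf{M}_{2N}(\mathbb{C})$ is a partial isometry with $U^{*}=U^{\sharp}$. Then there is a symplectic unitary $W\in\mathbf{M}_{2N}(\mathbb{C})$ such that $W\xi=U\xi$ for all $\xi\perp\ker(U)$.
   Context: A partial isometry is $U$ with $UU^*U=U$. For $X\in\mathbf{M}_{2N}(\mathbb{C})$ in $N\times N$ blocks $X=\begin{bmatrix}A&B\\C&D\end{bmatrix}$, $X^{\sharp}=\begin{bmatrix}D^{\mathrm T}&-B^{\mathrm T}\\-C^{\mathrm T}&A^{\mathrm T}\end{bmatrix}$, equivalently $X^\sharp=-ZX^{\mathrm T}Z$ with $Z=\begin{bmatrix}0&I\\-I&0\end{bmatrix}$. A symplectic unitary is a unitary $W\in\mathbf{M}_{2N}(\mathbb{C})$ with $W^{\mathrm T}ZW=Z$. *)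

theory Defs
  imports "HOL-Analysis.Analysis"
begin

text \<open>Matrices in M_{2N}(C) are indexed by the type 'n + 'n (so 2N = 2 * CARD('n)):
  Inl i is the i-th index of the first block, Inr i of the second block.\<close>

type_synonym 'n cmat2 = "complex ^ ('n + 'n) ^ ('n + 'n)"
type_synonym 'n cvec2 = "complex ^ ('n + 'n)"

definition adjointM :: "complex ^ 'm ^ 'k \<Rightarrow> complex ^ 'k ^ 'm" where
  "adjointM X = (\<chi> i j. cnj (X $ j $ i))"

definition cinner :: "complex ^ 'm \<Rightarrow> complex ^ 'm \<Rightarrow> complex" where
  "cinner x y = (\<Sum>i\<in>UNIV. cnj (x $ i) * y $ i)"

definition partial_isometry :: "complex ^ 'm ^ 'm \<Rightarrow> bool" where
  "partial_isometry U \<longleftrightarrow> U ** adjointM U ** U = U"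

definition unitaryM :: "complex ^ 'm ^ 'm \<Rightarrow> bool" where
  "unitaryM W \<longleftrightarrow> adjointM W ** W = mat 1 \<and> W ** adjointM W = mat 1"

definition Zmat :: "'n::finite cmat2" where
  "Zmat = (\<chi> a b. case (a, b) of
      (Inl i, Inr j) \<Rightarrow> (if i = j then 1 else 0)
    | (Inr i, Inl j) \<Rightarrow> (if i = j then -1 else 0)
    | _ \<Rightarrow> 0)"

text \<open>X# = [[D^T, -B^T], [-C^T, A^T]] for X = [[A, B], [C, D]].\<close>
definition sharp :: "'n::finite cmat2 \<Rightarrow> 'n cmat2" where
  "sharp X = (\<chi> a b. case (a, b) of
      (Inl i, Inl j) \<Rightarrow> X $ Inr j $ Inr i
    | (Inl i, Inr j) \<Rightarrow> - X $ Inl j $ Inr i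
    | (Inr i, Inl j) \<Rightarrow> - X $ Inr j $ Inl i
    | (Inr i, Inr j) \<Rightarrow> X $ Inl j $ Inl i)"

definition symplectic_unitary :: "'n::finite cmat2 \<Rightarrow> bool" where
  "symplectic_unitary W \<longleftrightarrow> unitaryM W \<and> transpose W ** Zmat ** W = Zmat"

end

theory Submission
  imports Defs
begin

lemma sum_UNIV_Plus: "sum f (UNIV::('a::finite+'b::finite) set) = (\<Sum>i\<in>UNIV. f (Inl i)) + (\<Sum>i\<in>UNIV. f (Inr i))"
  by (subst UNIV_Plus_UNIV[symmetric], subst sum.Plus) auto

definition outer :: "complex^'m \<Rightarrow> complex^'k \<Rightarrow> complex^'k^'m" where
  "outer a b = (\<chi> i j. a$i * cnj (b$j))"

definition Jv :: "'n::finite cvec2 \<Rightarrow> 'n cvec2" where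
  "Jv v = (\<chi> a. case a of Inl i \<Rightarrow> cnj (v$Inr i) | Inr i \<Rightarrow> - cnj (v$Inl i))"

definition tr :: "complex^'m^'m \<Rightarrow> complex" where "tr X = (\<Sum>i\<in>UNIV. X$i$i)"

lemma adj_adj[simp]: "adjointM (adjointM X) = X"
  by (simp add: adjointM_def vec_eq_iff)
lemma adj_add[simp]: "adjointM (A + B) = adjointM A + adjointM B"
  by (simp add: adjointM_def vec_eq_iff)
lemma adj_mult: "adjointM (A ** B) = adjointM B ** adjointM A"
  by (simp add: adjointM_def vec_eq_iff matrix_matrix_mult_def mult.commute)
lemma adj_outer[simp]: "adjointM (outer a b) = outer b a"
  by (simp add: adjointM_def vec_eq_iff outer_def mult.commute)

lemma cinner_adj: "cinner x (A *v y) = cinner (adjointM A *v x) y"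
  by (simp add: cinner_def adjointM_def matrix_vector_mult_def sum_distrib_left sum_distrib_right mult_ac)
     (rule sum.swap)

lemma cinner_add_right[simp]: "cinner x (y + z) = cinner x y + cinner x z"
  by (simp add: cinner_def distrib_left sum.distrib)
lemma cinner_scale_right[simp]: "cinner x (c *s y) = c * cinner x y"
  by (simp add: cinner_def sum_distrib_left mult_ac)
lemma cinner_scale_left[simp]: "cinner (c *s x) y = cnj c * cinner x y"
  by (simp add: cinner_def sum_distrib_left mult_ac)
lemma cinner_zero[simp]: "cinner 0 y = 0" "cinner y 0 = 0"
  by (simp_all add: cinner_def)
lemma cinner_diff_right[simp]: "cinner x (y - z) = cinner x y - cinner x z"
  by (simp add: cinner_def right_diff_distrib sum_subtractf)

lemma outer_mulv: "outer a b *v x = cinner b x *s a"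
  by (simp add: outer_def cinner_def matrix_vector_mult_def vec_eq_iff sum_distrib_left mult_ac)
lemma mult_outer: "A ** outer a b = outer (A *v a) b"
  by (simp add: outer_def matrix_vector_mult_def matrix_matrix_mult_def vec_eq_iff sum_distrib_left sum_distrib_right mult_ac)
lemma outer_mult: "outer a b ** A = outer a (adjointM A *v b)"
  by (simp add: outer_def adjointM_def matrix_vector_mult_def matrix_matrix_mult_def vec_eq_iff sum_distrib_left mult_ac)
lemma outer_outer: "outer a b ** outer c d = outer (cinner b c *s a) d"
  by (simp add: outer_def cinner_def matrix_matrix_mult_def vec_eq_iff sum_distrib_left sum_distrib_right mult_ac)
lemma outer_zero[simp]: "outer 0 b = 0" "outer a 0 = 0"
  by (simp_all add: outer_def vec_eq_iff)
lemma outer_neg[simp]: "outer (-a) (-b) = outer a b"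
  by (simp add: outer_def vec_eq_iff)
lemma tr_add[simp]: "tr (A + B) = tr A + tr B"
  by (simp add: tr_def sum.distrib)
lemma tr_outer[simp]: "tr (outer a b) = cinner b a"
  by (simp add: tr_def outer_def cinner_def mult.commute)

lemma Jv_Jv[simp]: "Jv (Jv x) = - x"
  by (simp add: Jv_def vec_eq_iff split: sum.split)
lemma cinner_Jv: "cinner (Jv x) (Jv y) = cinner y x"
  by (simp add: Jv_def cinner_def sum_UNIV_Plus sum.distrib mult.commute)
lemma cinner_Jv_self: "cinner x (Jv x) = 0" "cinner (Jv x) x = 0"
  by (simp_all add: Jv_def cinner_def sum_UNIV_Plus sum.distrib mult_ac sum_negf)

lemma sharp_add[simp]: "sharp (A + B) = sharp A + sharp B"
  by (simp add: sharp_def vec_eq_iff split: sum.split)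
lemma adj_sharp: "adjointM (sharp X) = sharp (adjointM X)"
  by (simp add: sharp_def adjointM_def vec_eq_iff split: sum.split)
lemma sharp_outer: "sharp (outer a b) = outer (Jv b) (Jv a)"
  by (simp add: sharp_def outer_def Jv_def vec_eq_iff mult.commute split: sum.split)
lemma sharp_Jv: "sharp X *v Jv x = Jv (adjointM X *v x)"
  by (simp add: sharp_def adjointM_def Jv_def matrix_vector_mult_def vec_eq_iff sum_UNIV_Plus sum_negf split: sum.split)
lemma Z_sharp: "Zmat ** sharp X = transpose X ** Zmat"
  unfolding vec_eq_iff
proof (intro allI)
  fix i j :: "'a + 'a"
  show "(Zmat ** sharp X) $ i $ j = (transpose X ** Zmat) $ i $ j"
    by (cases i; cases j) (simp_all add: sharp_def Zmat_def transpose_def matrix_matrix_mult_def sum_UNIV_Plus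
      if_distrib if_distribR sum.delta sum.delta' cong: if_cong)
qed

lemma Jv_zero[simp]: "Jv 0 = 0"
  by (simp add: Jv_def vec_eq_iff split: sum.split)

lemma cinner_self: "cinner x x = of_real ((norm x)^2)"
proof -
  have "(norm x)^2 = (\<Sum>i\<in>UNIV. (cmod (x$i))^2)"
    by (simp add: norm_vec_def L2_set_def sum_nonneg)
  have "cinner x x = (\<Sum>i\<in>UNIV. complex_of_real ((cmod (x$i))^2))"
    unfolding cinner_def by (rule sum.cong) (simp_all only: complex_norm_square mult.commute)
  also have "\<dots> = complex_of_real (\<Sum>i\<in>UNIV. (cmod (x$i))^2)" by (simp only: of_real_sum)
  finally show ?thesis using \<open>(norm x)^2 = _\<close> by simp
qed

lemma matrix_add_rdistrib: "((B + C) ** A) = (B ** A) + (C ** A)"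
  by (vector matrix_matrix_mult_def sum.distrib[symmetric] field_simps)

lemma step:
  assumes pi: "partial_isometry U" and sh: "adjointM U = sharp U"
  and e: "U *v e = 0" "cinner e e = 1" and f: "adjointM U *v f = 0" "cinner f f = 1"
  defines "U' \<equiv> U + outer f e + outer (Jv f) (Jv e)"
  shows "partial_isometry U'" "adjointM U' = sharp U'"
   "Re (tr (adjointM U' ** U')) = Re (tr (adjointM U ** U)) + 2"
   "\<And>\<eta>. U' *v \<eta> = 0 \<Longrightarrow> U *v \<eta> = 0"
   "\<And>\<xi>. (\<forall>\<eta>. U *v \<eta> = 0 \<longrightarrow> cinner \<eta> \<xi> = 0) \<Longrightarrow> U' *v \<xi> = U *v \<xi>"
proof -
  define h where "h = Jv e"
  define g where "g = Jv f"
  have U'd: "U' = U + outer f e + outer g h" unfolding U'_def g_def h_def ..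
  have Ush: "U = sharp (adjointM U)"
    by (metis adj_adj adj_sharp sh)
  have Uh: "U *v h = 0" unfolding h_def
    by (subst Ush, simp add: sharp_Jv e)
  have Ug: "adjointM U *v g = 0" unfolding g_def
    by (simp add: sh sharp_Jv[of U] f[unfolded sh])
  have hh: "cinner h h = 1" "cinner g g = 1" unfolding h_def g_def by (simp_all add: cinner_Jv e f)
  have eh: "cinner e h = 0" "cinner h e = 0" "cinner f g = 0" "cinner g f = 0"
    unfolding h_def g_def by (simp_all add: cinner_Jv_self)
  have PP: "adjointM U ** U ** adjointM U = adjointM U"
    using pi unfolding partial_isometry_def by (metis adj_mult adj_adj matrix_mul_assoc)
  have A1: "adjointM U' ** U' = adjointM U ** U + outer e e + outer h h"
    unfolding U'd
    by (simp add: matrix_add_ldistrib matrix_add_rdistrib mult_outer outer_mult outer_outer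
        f Ug e Uh hh eh matrix_vector_mult_add_rdistrib outer_mulv)
  have A2: "U' ** (adjointM U' ** U') = U'"
  proof -
    have "outer f e ** (adjointM U ** U) = 0"
      by (simp add: outer_mult adj_mult matrix_vector_mul_assoc[symmetric] e)
    moreover have "outer g h ** (adjointM U ** U) = 0"
      by (simp add: outer_mult adj_mult matrix_vector_mul_assoc[symmetric] Uh)
    moreover have "U ** (adjointM U ** U) = U" using pi unfolding partial_isometry_def
      by (simp add: matrix_mul_assoc)
    ultimately show ?thesis
      unfolding A1 unfolding U'd
      by (simp add: matrix_add_ldistrib matrix_add_rdistrib mult_outer outer_mult outer_outer
        f Ug e Uh hh eh matrix_vector_mult_add_rdistrib outer_mulv)
  qed
  show "partial_isometry U'" unfolding partial_isometry_def
    using A2 by (simp add: matrix_mul_assoc)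
  show "adjointM U' = sharp U'"
    unfolding U'_def by (simp add: sharp_outer sh)
  show "Re (tr (adjointM U' ** U')) = Re (tr (adjointM U ** U)) + 2"
    unfolding A1 using e hh by simp
  show "U *v \<eta> = 0" if "U' *v \<eta> = 0" for \<eta>
  proof -
    have exp: "U' *v \<eta> = U *v \<eta> + cinner e \<eta> *s f + cinner h \<eta> *s g"
      unfolding U'd by (simp add: matrix_vector_mult_add_rdistrib outer_mulv)
    have "cinner f (U' *v \<eta>) = cinner e \<eta>"
      unfolding exp by (simp add: cinner_adj f eh)
    then have c1: "cinner e \<eta> = 0" using that by simp
    have "cinner g (U' *v \<eta>) = cinner h \<eta>"
      unfolding exp by (simp add: cinner_adj Ug eh hh)
    then have c2: "cinner h \<eta> = 0" using that by simp
    show ?thesis using exp that c1 c2 by simp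
  qed
  show "U' *v \<xi> = U *v \<xi>" if "\<forall>\<eta>. U *v \<eta> = 0 \<longrightarrow> cinner \<eta> \<xi> = 0" for \<xi>
    using that e Uh unfolding U'd by (simp add: matrix_vector_mult_add_rdistrib outer_mulv)
qed


lemma sq_le_self: "(x::real)^2 \<le> x \<Longrightarrow> x \<le> 1"
proof (rule ccontr)
  assume a: "x^2 \<le> x" "\<not> x \<le> 1"
  then have "x * 1 < x * x" by (intro mult_strict_left_mono) auto
  then show False using a by (simp add: power2_eq_square)
qed

lemma pi_bound:
  fixes U :: "complex^'m^'m"
  assumes pi: "partial_isometry U"
  shows "Re (tr (adjointM U ** U)) \<le> real CARD('m)"
proof -
  define P where "P = adjointM U ** U"
  have PP: "P ** P = P"
    using pi unfolding P_def partial_isometry_def by (metis matrix_mul_assoc)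
  have aP: "adjointM P = P" unfolding P_def by (simp add: adj_mult)
  have Pki: "P$k$i = cnj (P$i$k)" for i k
    using arg_cong[OF aP, of "\<lambda>M. M$k$i"] by (simp add: adjointM_def)
  have le1: "Re (P$i$i) \<le> 1" for i
  proof -
    have "P$i$i = (P**P)$i$i" using PP by simp
    also have "\<dots> = (\<Sum>k\<in>UNIV. P$i$k * cnj (P$i$k))"
    proof -
      have "(P**P)$i$i = (\<Sum>k\<in>UNIV. P$i$k * P$k$i)" by (simp add: matrix_matrix_mult_def)
      also have "\<dots> = (\<Sum>k\<in>UNIV. P$i$k * cnj (P$i$k))"
        by (intro sum.cong refl) (subst Pki, rule refl)
      finally show ?thesis .
    qed
    also have "\<dots> = (\<Sum>k\<in>UNIV. complex_of_real ((cmod (P$i$k))^2))"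
      by (simp only: complex_norm_square)
    finally have eq: "Re (P$i$i) = (\<Sum>k\<in>UNIV. (cmod (P$i$k))^2)"
      by (simp add: Re_sum)
    have "(cmod (P$i$i))^2 \<le> (\<Sum>k\<in>UNIV. (cmod (P$i$k))^2)"
      by (rule member_le_sum) auto
    moreover have "(Re (P$i$i))^2 \<le> (cmod (P$i$i))^2"
      by (metis abs_Re_le_cmod abs_ge_zero power2_abs power_mono)
    ultimately have "(Re (P$i$i))^2 \<le> Re (P$i$i)" using eq by simp
    then show ?thesis using sq_le_self by blast
  qed
  have "Re (tr P) = (\<Sum>i\<in>UNIV. Re (P$i$i))" by (simp add: tr_def Re_sum)
  also have "\<dots> \<le> (\<Sum>i\<in>(UNIV::'m set). 1)" by (rule sum_mono) (rule le1)
  finally show ?thesis unfolding P_def by simp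
qed

lemma mulv_scale: "(A::complex^'a^'b) *v (c *s v) = c *s (A *v v)"
  unfolding vec_eq_iff matrix_vector_mult_def
  by (simp add: sum_distrib_left) (intro allI sum.cong refl, simp add: algebra_simps)

lemma normalize_ker:
  assumes "A *v v = 0" "v \<noteq> 0"
  shows "\<exists>e. A *v e = 0 \<and> cinner e e = 1"
proof -
  define c where "c = complex_of_real (1 / norm v)"
  have n: "norm v > 0" using assms by simp
  have "cinner (c *s v) (c *s v) = cnj c * (c * cinner v v)" by simp
  also have "\<dots> = complex_of_real ((1 / norm v) * ((1 / norm v) * (norm v)^2))"
    unfolding c_def cinner_self by (simp only: complex_cnj_complex_of_real of_real_mult)
  also have "(1 / norm v) * ((1 / norm v) * (norm v)^2) = 1"
    using n by (simp add: power2_eq_square)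
  finally have "cinner (c *s v) (c *s v) = 1" by simp
  moreover have "A *v (c *s v) = 0" by (simp add: mulv_scale assms)
  ultimately show ?thesis by blast
qed


definition goalP :: "'n::finite cmat2 \<Rightarrow> bool" where
  "goalP U \<longleftrightarrow> (\<exists>W :: 'n cmat2. symplectic_unitary W \<and>
           (\<forall>\<xi> :: 'n cvec2. (\<forall>\<eta>. U *v \<eta> = 0 \<longrightarrow> cinner \<eta> \<xi> = 0) \<longrightarrow> W *v \<xi> = U *v \<xi>))"

lemma base_case:
  fixes U :: "'n::finite cmat2"
  assumes sh: "adjointM U = sharp U" and u: "adjointM U ** U = mat 1"
  shows "goalP U"
proof -
  have "U ** adjointM U = mat 1" using u matrix_left_right_inverse by blast
  moreover have "transpose U ** Zmat ** U = Zmat"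
  proof -
    have "transpose U ** Zmat ** U = Zmat ** sharp U ** U" by (simp add: Z_sharp)
    also have "\<dots> = Zmat ** (adjointM U ** U)" by (simp add: sh matrix_mul_assoc)
    finally show ?thesis using u by simp
  qed
  ultimately have "symplectic_unitary U" using u by (simp add: symplectic_unitary_def unitaryM_def)
  then show ?thesis unfolding goalP_def by blast
qed

lemma main_ind:
  "\<forall>U::'n::finite cmat2. partial_isometry U \<longrightarrow> adjointM U = sharp U \<longrightarrow>
     real CARD('n+'n) - Re (tr (adjointM U ** U)) < 2 * real k \<longrightarrow> goalP U"
proof (induction k)
  case 0
  show ?case
  proof (intro allI impI)
    fix U :: "'n cmat2"
    assume "partial_isometry U" "real CARD('n+'n) - Re (tr (adjointM U ** U)) < 2 * real 0"
    then show "goalP U" using pi_bound[of U] by simp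
  qed
next
  case (Suc k)
  show ?case
  proof (intro allI impI)
    fix U :: "'n cmat2"
    assume pi: "partial_isometry U" and sh: "adjointM U = sharp U"
      and lt: "real CARD('n+'n) - Re (tr (adjointM U ** U)) < 2 * real (Suc k)"
    show "goalP U"
    proof (cases "adjointM U ** U = mat 1")
      case True
      then show ?thesis using base_case sh by blast
    next
      case False
      then obtain x where x: "(adjointM U ** U) *v x \<noteq> mat 1 *v x" using matrix_eq by blast
      have "U ** adjointM U \<noteq> mat 1" using False matrix_left_right_inverse by blast
      then obtain y where y: "(U ** adjointM U) *v y \<noteq> mat 1 *v y" using matrix_eq by blast
      have UPU: "U ** adjointM U ** U = U" using pi by (simp add: partial_isometry_def)
      have PUP: "adjointM U ** U ** adjointM U = adjointM U"
        using UPU by (metis adj_mult adj_adj matrix_mul_assoc)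
      have "U *v (x - (adjointM U ** U) *v x) = 0"
        by (simp add: matrix_vector_mult_diff_distrib matrix_vector_mul_assoc matrix_mul_assoc UPU)
      moreover have "x - (adjointM U ** U) *v x \<noteq> 0" using x by simp
      ultimately obtain e where e: "U *v e = 0" "cinner e e = 1" using normalize_ker by blast
      have "adjointM U *v (y - (U ** adjointM U) *v y) = 0"
        by (simp add: matrix_vector_mult_diff_distrib matrix_vector_mul_assoc matrix_mul_assoc PUP)
      moreover have "y - (U ** adjointM U) *v y \<noteq> 0" using y by simp
      ultimately obtain f where f: "adjointM U *v f = 0" "cinner f f = 1" using normalize_ker by blast
      define U' where "U' = U + outer f e + outer (Jv f) (Jv e)"
      note st = step[OF pi sh e f, folded U'_def]
      have "real CARD('n+'n) - Re (tr (adjointM U' ** U')) < 2 * real k"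
        using lt st(3) by simp
      then have "goalP U'" using Suc.IH st(1) st(2) by simp
      then obtain W where W: "symplectic_unitary W"
        "\<forall>\<xi>. (\<forall>\<eta>. U' *v \<eta> = 0 \<longrightarrow> cinner \<eta> \<xi> = 0) \<longrightarrow> W *v \<xi> = U' *v \<xi>"
        unfolding goalP_def by blast
      have "\<forall>\<xi>. (\<forall>\<eta>. U *v \<eta> = 0 \<longrightarrow> cinner \<eta> \<xi> = 0) \<longrightarrow> W *v \<xi> = U *v \<xi>"
      proof (intro allI impI)
        fix \<xi> assume H: "\<forall>\<eta>. U *v \<eta> = 0 \<longrightarrow> cinner \<eta> \<xi> = 0"
        then have "\<forall>\<eta>. U' *v \<eta> = 0 \<longrightarrow> cinner \<eta> \<xi> = 0" using st(4) by blast
        then have "W *v \<xi> = U' *v \<xi>" using W(2) by blast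
        also have "\<dots> = U *v \<xi>" using st(5)[OF H] .
        finally show "W *v \<xi> = U *v \<xi>" .
      qed
      then show ?thesis using W(1) unfolding goalP_def by blast
    qed
  qed
qed

theorem mainTheorem18:
  fixes U :: "'n::finite cmat2"
  assumes "partial_isometry U"
    and "adjointM U = sharp U"
  shows "\<exists>W :: 'n cmat2. symplectic_unitary W \<and>
           (\<forall>\<xi> :: 'n cvec2. (\<forall>\<eta>. U *v \<eta> = 0 \<longrightarrow> cinner \<eta> \<xi> = 0) \<longrightarrow> W *v \<xi> = U *v \<xi>)"
proof -
  obtain k :: nat where "real CARD('n+'n) - Re (tr (adjointM U ** U)) < real k"
    using reals_Archimedean2 by blast
  then have "real CARD('n+'n) - Re (tr (adjointM U ** U)) < 2 * real k" by linarith
  then have "goalP U" using main_ind assms by blast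
  then show ?thesis unfolding goalP_def .
qed

end
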